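(* Let $A\subset(0,1)^n$ be an open subanalytic cell which is prepared with center $0$ and such that $x_1,\dots,x_n$ are all asymptotically undetermined on $A$. Then there exists a sliver function for $A$, i.e. there exist $\epsilon\in(0,1)$ and real numbers $0<p_i<q_i$ ($i=2,\dots,n$) such that the map $\psi:(0,\epsilon)\times\prod_{i=2}^n(p_i,q_i)\to\mathbb{R}^n$, $\psi(t)=(t_1,t_1^{t_2},\dots,t_1^{t_n})$, has image contained in $A$.
   Context: "Subanalytic" means globally subanalytic (definable in the real field expanded by all restricted analytic functions). Analytic on a set = extends analytically to an open neighbourhood; analytic unit = analytic of constant nonzero sign. Subanalytic terms: finite compositions of restricted analytic functions, $+$, $\times$, and $t\mapsto t^r$ ($t\ge0$), $0$ ($t<0$), $r\in\mathbb{Q}$. An open subanalytic cell $A\subset(0,1)^n$: for each $i$, $\Pi_{i-1}(A)$ is quantifier-free definable from subanalytic terms with $=,<$, and $\Pi_i(A)=\{x_{\le i}:x_{<i}\in\Pi_{i-1}(A),\ a_i(x_{<i})<x_i<b_i(x_{<i})\}$ with $a_i<b_i$ analytic subanalytic terms (one-sided unbounded forms cannot occur inside $(0,1)^n$; for $i=1$, $a_1<b_1$ are constants). The zero tuple is a center, with coordinates $x$ themselves. A strong subanalytic unit on such a cell $A'\subset(0,1)^k$ with center $0$ is $U\circ\varphi$, $\varphi(x)=(x^{\beta_1},\dots,x^{\beta_N})$ bounded on $A'$, $\beta_j\in\mathbb{Q}^k$, $U$ an analytic unit on the closure of $\operatorname{im}\varphi$. $x_i$ is asymptotically determined on $A$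 if $b_i<Ca_i$ on $\Pi_{i-1}(A)$ for some $C>0$, asymptotically undetermined otherwise. For $J'$ a subset of the undetermined indices, inductively on $k$: for $k=0$ everything is $\emptyset$-prepared; for $k\ge1$, $A'$ is $J'$-prepared (with center $0$) if the family $\{a_k,b_k,b_k-a_k\}$ is $(J'\cap\{1,\dots,k-1\})$-prepared on $\Pi_{k-1}(A')$ with center $0$ and $0$ is in the closure of the image of $a_k$; a finite family of subanalytic functions on $A'$ is $J'$-prepared on $A'$ if $A'$ is and each member is $0$ on $A'$ or of the form $x^\alpha u(x)$ with $u$ a strong unit with center $0$ and $\alpha_i=0$ for $i\notin J'$. "Prepared" means $J'$-prepared with $J'$ the set of all asymptotically undetermined indices. *)

theory Defs
  imports "HOL-Analysis.Analysis"
begin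

text \<open>Points of R^m are represented as real lists of length m; coordinate x_i (1-based)
  is x ! (i-1).  Topological notions on R^m are made explicit via the sup-norm.\<close>

definition box_nbhd :: "nat \<Rightarrow> real list \<Rightarrow> real \<Rightarrow> real list set" where
  "box_nbhd m a r = {x. length x = m \<and> (\<forall>i<m. \<bar>x ! i - a ! i\<bar> < r)}"

definition open_n :: "nat \<Rightarrow> real list set \<Rightarrow> bool" where
  "open_n m V \<longleftrightarrow> V \<subseteq> {x. length x = m} \<and> (\<forall>a\<in>V. \<exists>r>0. box_nbhd m a r \<subseteq> V)"

definition closure_n :: "nat \<Rightarrow> real list set \<Rightarrow> real list set" where
  "closure_n m S = {y. length y = m \<and> (\<forall>e>0. \<exists>z\<in>S. \<forall>i<m. \<bar>y ! i - z ! i\<bar> < e)}"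

text \<open>Real analyticity on an open set V of R^m: locally the sum of an (absolutely, i.e.
  unconditionally) convergent power series indexed by multi-indices (lists of length m).\<close>
definition analytic_on_n :: "nat \<Rightarrow> real list set \<Rightarrow> (real list \<Rightarrow> real) \<Rightarrow> bool" where
  "analytic_on_n m V g \<longleftrightarrow> open_n m V \<and>
     (\<forall>a\<in>V. \<exists>r>0. \<exists>c :: nat list \<Rightarrow> real. box_nbhd m a r \<subseteq> V \<and>
        (\<forall>x\<in>box_nbhd m a r.
           ((\<lambda>\<alpha>. c \<alpha> * (\<Prod>i<m. (x ! i - a ! i) ^ (\<alpha> ! i))) has_sum g x) {\<alpha>. length \<alpha> = m}))"

definition analytic_set :: "nat \<Rightarrow> real list set \<Rightarrow> (real list \<Rightarrow> real) \<Rightarrow> bool" where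
  "analytic_set m S f \<longleftrightarrow> (\<exists>V g. open_n m V \<and> S \<subseteq> V \<and> analytic_on_n m V g \<and> (\<forall>x\<in>S. g x = f x))"

definition cube_n :: "nat \<Rightarrow> real list set" where
  "cube_n m = {x. length x = m \<and> (\<forall>i<m. -1 \<le> x ! i \<and> x ! i \<le> 1)}"

text \<open>Restricted analytic function in m variables (only its values on lists of length m matter).\<close>
definition restricted_analytic :: "nat \<Rightarrow> (real list \<Rightarrow> real) \<Rightarrow> bool" where
  "restricted_analytic m F \<longleftrightarrow> (\<exists>g. analytic_set m (cube_n m) g \<and>
      (\<forall>y. length y = m \<longrightarrow> F y = (if y \<in> cube_n m then g y else 0)))"

definition rpow :: "real \<Rightarrow> real \<Rightarrow> real" where
  "rpow r t = (if t < 0 then 0 else if t = 0 then (if r = 0 then 1 else 0) else t powr r)"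

text \<open>Subanalytic terms in n variables, as the functions they define.\<close>
inductive sa_term :: "nat \<Rightarrow> (real list \<Rightarrow> real) \<Rightarrow> bool" for n :: nat where
  var: "i < n \<Longrightarrow> sa_term n (\<lambda>x. x ! i)"
| const: "sa_term n (\<lambda>x. c)"
| comp: "restricted_analytic m F \<Longrightarrow> (\<forall>j<m. sa_term n (ts j)) \<Longrightarrow>
           sa_term n (\<lambda>x. F (map (\<lambda>j. ts j x) [0..<m]))"
| add: "sa_term n s \<Longrightarrow> sa_term n t \<Longrightarrow> sa_term n (\<lambda>x. s x + t x)"
| mult: "sa_term n s \<Longrightarrow> sa_term n t \<Longrightarrow> sa_term n (\<lambda>x. s x * t x)"
| pow: "sa_term n t \<Longrightarrow> r \<in> \<rat> \<Longrightarrow> sa_term n (\<lambda>x. rpow r (t x))"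

inductive qf_formula :: "nat \<Rightarrow> (real list \<Rightarrow> bool) \<Rightarrow> bool" for n :: nat where
  eq: "sa_term n s \<Longrightarrow> sa_term n t \<Longrightarrow> qf_formula n (\<lambda>x. s x = t x)"
| less: "sa_term n s \<Longrightarrow> sa_term n t \<Longrightarrow> qf_formula n (\<lambda>x. s x < t x)"
| neg: "qf_formula n P \<Longrightarrow> qf_formula n (\<lambda>x. \<not> P x)"
| conj: "qf_formula n P \<Longrightarrow> qf_formula n Q \<Longrightarrow> qf_formula n (\<lambda>x. P x \<and> Q x)"

definition qf_definable :: "nat \<Rightarrow> real list set \<Rightarrow> bool" where
  "qf_definable m S \<longleftrightarrow> (\<exists>P. qf_formula m P \<and> S = {x. length x = m \<and> P x})"

definition proj :: "nat \<Rightarrow> real list set \<Rightarrow> real list set" where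
  "proj i A = take i ` A"

definition open_sa_cell :: "nat \<Rightarrow> real list set \<Rightarrow> (nat \<Rightarrow> real list \<Rightarrow> real) \<Rightarrow>
    (nat \<Rightarrow> real list \<Rightarrow> real) \<Rightarrow> bool" where
  "open_sa_cell n A a b \<longleftrightarrow> A \<noteq> {} \<and>
     A \<subseteq> {x. length x = n \<and> (\<forall>i<n. 0 < x ! i \<and> x ! i < 1)} \<and>
     (\<forall>i\<in>{1..n}.
        qf_definable (i - 1) (proj (i - 1) A) \<and>
        sa_term (i - 1) (a i) \<and> sa_term (i - 1) (b i) \<and>
        analytic_set (i - 1) (proj (i - 1) A) (a i) \<and>
        analytic_set (i - 1) (proj (i - 1) A) (b i) \<and>
        (\<forall>y\<in>proj (i - 1) A. a i y < b i y) \<and>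
        proj i A = {x. length x = i \<and> take (i - 1) x \<in> proj (i - 1) A \<and>
                       a i (take (i - 1) x) < x ! (i - 1) \<and> x ! (i - 1) < b i (take (i - 1) x)})"

definition asym_determined :: "real list set \<Rightarrow> (nat \<Rightarrow> real list \<Rightarrow> real) \<Rightarrow>
    (nat \<Rightarrow> real list \<Rightarrow> real) \<Rightarrow> nat \<Rightarrow> bool" where
  "asym_determined A a b i \<longleftrightarrow> (\<exists>C>0. \<forall>y\<in>proj (i - 1) A. b i y < C * a i y)"

definition monom :: "nat \<Rightarrow> real list \<Rightarrow> real list \<Rightarrow> real" where
  "monom k \<alpha> x = (\<Prod>i<k. (x ! i) powr (\<alpha> ! i))"

definition strong_unit :: "nat \<Rightarrow> real list set \<Rightarrow> (real list \<Rightarrow> real) \<Rightarrow> bool" where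
  "strong_unit k S u \<longleftrightarrow> (\<exists>(\<beta>::real list list) U.
     (\<forall>bj\<in>set \<beta>. length bj = k \<and> (\<forall>i<k. bj ! i \<in> \<rat>)) \<and>
     (let N = length \<beta>; \<phi> = (\<lambda>x. map (\<lambda>bj. monom k bj x) \<beta>) in
        (\<exists>M. \<forall>x\<in>S. \<forall>j<N. \<bar>\<phi> x ! j\<bar> \<le> M) \<and>
        analytic_set N (closure_n N (\<phi> ` S)) U \<and>
        ((\<forall>y\<in>closure_n N (\<phi> ` S). U y > 0) \<or> (\<forall>y\<in>closure_n N (\<phi> ` S). U y < 0)) \<and>
        (\<forall>x\<in>S. u x = U (\<phi> x))))"

text \<open>A single function is J-prepared on S (dimension k) with center 0 (indices in J are 1-based).\<close>
definition prepared_fun :: "nat set \<Rightarrow> nat \<Rightarrow> real list set \<Rightarrow> (real list \<Rightarrow> real) \<Rightarrow> bool" where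
  "prepared_fun J k S f \<longleftrightarrow> (\<forall>x\<in>S. f x = 0) \<or>
     (\<exists>\<alpha> u. length \<alpha> = k \<and> (\<forall>i<k. \<alpha> ! i \<in> \<rat>) \<and> (\<forall>i<k. Suc i \<notin> J \<longrightarrow> \<alpha> ! i = 0) \<and>
        strong_unit k S u \<and> (\<forall>x\<in>S. f x = monom k \<alpha> x * u x))"

fun prepared_cell :: "nat set \<Rightarrow> nat \<Rightarrow> real list set \<Rightarrow> (nat \<Rightarrow> real list \<Rightarrow> real) \<Rightarrow>
    (nat \<Rightarrow> real list \<Rightarrow> real) \<Rightarrow> bool" where
  "prepared_cell J 0 A a b = True"
| "prepared_cell J (Suc m) A a b \<longleftrightarrow>
     prepared_cell (J \<inter> {1..m}) m (proj m A) a b \<and>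
     (\<forall>f\<in>{a (Suc m), b (Suc m), (\<lambda>x. b (Suc m) x - a (Suc m) x)}.
        prepared_fun (J \<inter> {1..m}) m (proj m A) f) \<and>
     0 \<in> closure (a (Suc m) ` proj m A)"

definition prepared :: "nat \<Rightarrow> real list set \<Rightarrow> (nat \<Rightarrow> real list \<Rightarrow> real) \<Rightarrow>
    (nat \<Rightarrow> real list \<Rightarrow> real) \<Rightarrow> bool" where
  "prepared n A a b \<longleftrightarrow> prepared_cell {i\<in>{1..n}. \<not> asym_determined A a b i} n A a b"

end

theory Submission
  imports Defs
begin


lemma prod_zero_pow:
  fixes \<alpha> :: "nat list"
  shows "(\<Prod>i<m. (0::real) ^ (\<alpha> ! i)) = (if \<forall>i<m. \<alpha> ! i = 0 then 1 else 0)"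
proof (cases "\<forall>i<m. \<alpha> ! i = 0")
  case True then show ?thesis by simp
next
  case False
  then obtain i where "i < m" "\<alpha> ! i \<noteq> 0" by auto
  then show ?thesis using False by (auto intro!: prod_zero)
qed

lemma analytic_cont:
  assumes an: "analytic_on_n m V g" and yV: "y \<in> V" and e: "e > 0"
  shows "\<exists>\<delta>>0. \<forall>x. length x = m \<and> (\<forall>i<m. \<bar>x!i - y!i\<bar> < \<delta>) \<longrightarrow> \<bar>g x - g y\<bar> < e"
proof -
  define \<Omega> where "\<Omega> = {\<alpha>::nat list. length \<alpha> = m}"
  have ly: "length y = m" using an yV unfolding analytic_on_n_def open_n_def by auto
  obtain r c where r: "r > 0" "box_nbhd m y r \<subseteq> V" and
    hs: "\<And>x. x \<in> box_nbhd m y r \<Longrightarrow>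
       ((\<lambda>\<alpha>. c \<alpha> * (\<Prod>i<m. (x ! i - y ! i) ^ (\<alpha> ! i))) has_sum g x) \<Omega>"
    using an yV unfolding analytic_on_n_def \<Omega>_def by blast
  define deg where "deg \<alpha> = (\<Sum>i<m. \<alpha> ! i)" for \<alpha> :: "nat list"
  define B where "B \<alpha> = \<bar>c \<alpha>\<bar> * (r/2) ^ deg \<alpha>" for \<alpha>
  define z where "z = map (\<lambda>i. y!i + r/2) [0..<m]"
  have zbox: "z \<in> box_nbhd m y r" using r unfolding z_def box_nbhd_def by auto
  have "((\<lambda>\<alpha>. c \<alpha> * (\<Prod>i<m. (z ! i - y ! i) ^ (\<alpha> ! i))) has_sum g z) \<Omega>" using hs zbox by blast
  moreover have "\<And>\<alpha>. (\<Prod>i<m. (z ! i - y ! i) ^ (\<alpha> ! i)) = (r/2) ^ deg \<alpha>"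
    unfolding deg_def z_def by (simp add: power_sum)
  ultimately have hzz: "((\<lambda>\<alpha>. c \<alpha> * (r/2) ^ deg \<alpha>) has_sum g z) \<Omega>" by simp
  then have "(\<lambda>\<alpha>. \<bar>c \<alpha> * (r/2) ^ deg \<alpha>\<bar>) summable_on \<Omega>"
  proof -
    have "(\<lambda>\<alpha>. c \<alpha> * (r/2) ^ deg \<alpha>) summable_on \<Omega>" using hzz summable_on_def by blast
    then have "(\<lambda>\<alpha>. norm (c \<alpha> * (r/2) ^ deg \<alpha>)) summable_on \<Omega>" by (rule summable_on_iff_abs_summable_on_real[THEN iffD1])
    then show ?thesis by simp
  qed
  then have Bsum: "B summable_on \<Omega>" unfolding B_def using r by (simp add: abs_mult)
  define T where "T = infsum B \<Omega>"
  have T0: "T \<ge> 0" unfolding T_def B_def by (rule infsum_nonneg) (use r in auto)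
  define \<alpha>0 where "\<alpha>0 = replicate m (0::nat)"
  have ybox: "y \<in> box_nbhd m y r" using r ly unfolding box_nbhd_def by auto
  have Py: "\<And>\<alpha>. \<alpha> \<in> \<Omega> \<Longrightarrow> (\<Prod>i<m. (y ! i - y ! i) ^ (\<alpha> ! i)) = (if \<alpha> = \<alpha>0 then 1 else (0::real))"
  proof -
    fix \<alpha> :: "nat list" assume "\<alpha> \<in> \<Omega>"
    then have l: "length \<alpha> = m" by (simp add: \<Omega>_def)
    have "(\<forall>i<m. \<alpha> ! i = 0) \<longleftrightarrow> \<alpha> = \<alpha>0"
      using l unfolding \<alpha>0_def by (auto simp: list_eq_iff_nth_eq)
    then show "?thesis \<alpha>" using prod_zero_pow[of \<alpha> m] by simp
  qed
  have a0: "\<alpha>0 \<in> \<Omega>" by (simp add: \<alpha>0_def \<Omega>_def)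
  have hy: "((\<lambda>\<alpha>. c \<alpha> * (\<Prod>i<m. (y ! i - y ! i) ^ (\<alpha> ! i))) has_sum g y) \<Omega>" using hs ybox by blast
  have hy2: "((\<lambda>\<alpha>. c \<alpha> * (\<Prod>i<m. (y ! i - y ! i) ^ (\<alpha> ! i))) has_sum c \<alpha>0) \<Omega>"
  proof -
    have "((\<lambda>\<alpha>. c \<alpha>) has_sum c \<alpha>0) {\<alpha>0}" using has_sum_finite[of "{\<alpha>0}" c] by simp
    moreover have "?thesis \<longleftrightarrow> ((\<lambda>\<alpha>. c \<alpha>) has_sum c \<alpha>0) {\<alpha>0}"
      by (rule has_sum_cong_neutral) (use a0 Py in auto)
    ultimately show ?thesis by simp
  qed
  have gy: "g y = c \<alpha>0" using has_sum_unique[OF hy hy2] .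
  define \<delta> where "\<delta> = min (r/4) (e * r / (4 * (T + 1)))"
  have d0: "\<delta> > 0" unfolding \<delta>_def using r e T0 by auto
  define q where "q = 2 * \<delta> / r"
  have q0: "q > 0" "q \<le> 1/2" using d0 r unfolding q_def \<delta>_def by (auto simp: field_simps)
  have qT: "q * T < e"
  proof -
    have "\<delta> \<le> e*r/(4*(T+1))" by (simp add: \<delta>_def)
    then have "2*\<delta>/r \<le> 2*(e*r/(4*(T+1)))/r" using r by (intro divide_right_mono) auto
    also have "\<dots> = e / (2 * (T+1))" using r T0 by (simp add: divide_simps)
    finally have "q \<le> e / (2 * (T+1))" unfolding q_def .
    then have "q * T \<le> e / (2 * (T+1)) * T" by (rule mult_right_mono) (rule T0)
    also have "\<dots> < e" using T0 e by (simp add: field_simps) (metis add_nonneg_pos mult_nonneg_nonneg less_le zero_less_mult_iff zero_less_numeral)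
    finally show ?thesis .
  qed
  show ?thesis
  proof (intro exI[of _ \<delta>] conjI allI impI d0)
    fix x assume x: "length x = m \<and> (\<forall>i<m. \<bar>x!i - y!i\<bar> < \<delta>)"
    have xbox: "x \<in> box_nbhd m y r" using x d0 unfolding box_nbhd_def \<delta>_def by force
    define D where "D \<alpha> = c \<alpha> * ((\<Prod>i<m. (x ! i - y ! i) ^ (\<alpha> ! i)) - (\<Prod>i<m. (y ! i - y ! i) ^ (\<alpha> ! i)))" for \<alpha>
    have hD: "(D has_sum (g x - g y)) \<Omega>"
      unfolding D_def right_diff_distrib using has_sum_add[OF hs[OF xbox] has_sum_uminusI[OF hy]] by simp
    have Dle: "\<bar>D \<alpha>\<bar> \<le> q * B \<alpha>" if "\<alpha> \<in> \<Omega>" for \<alpha>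
    proof (cases "\<alpha> = \<alpha>0")
      case True
      then show ?thesis using q0 unfolding D_def B_def \<alpha>0_def using r by simp
    next
      case False
      have l: "length \<alpha> = m" using that by (simp add: \<Omega>_def)
      have dg: "deg \<alpha> \<ge> 1"
      proof (rule ccontr)
        assume "\<not> 1 \<le> deg \<alpha>"
        then have "deg \<alpha> = 0" by arith
        then have "\<forall>i<m. \<alpha>!i = 0" unfolding deg_def by simp
        then have "\<alpha> = \<alpha>0" using l unfolding \<alpha>0_def by (auto simp: list_eq_iff_nth_eq)
        then show False using False by simp
      qed
      have "\<bar>\<Prod>i<m. (x ! i - y ! i) ^ (\<alpha> ! i)\<bar> = (\<Prod>i<m. \<bar>x ! i - y ! i\<bar> ^ (\<alpha> ! i))"
        by (simp add: abs_prod power_abs)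
      also have "\<dots> \<le> (\<Prod>i<m. \<delta> ^ (\<alpha> ! i))"
      proof (rule prod_mono)
        fix i assume "i \<in> {..<m}"
        then have "\<bar>x!i - y!i\<bar> \<le> \<delta>" using x by (auto intro: less_imp_le)
        then show "0 \<le> \<bar>x ! i - y ! i\<bar> ^ (\<alpha> ! i) \<and> \<bar>x ! i - y ! i\<bar> ^ (\<alpha> ! i) \<le> \<delta> ^ (\<alpha> ! i)"
          by (auto intro: power_mono)
      qed
      also have "\<dots> = \<delta> ^ deg \<alpha>" unfolding deg_def by (simp add: power_sum)
      also have "\<dots> = q ^ deg \<alpha> * (r/2) ^ deg \<alpha>"
        unfolding q_def using r by (simp add: power_mult_distrib[symmetric])
      also have "\<dots> \<le> q * (r/2) ^ deg \<alpha>"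
      proof -
        have "q ^ deg \<alpha> \<le> q ^ 1" using q0 dg by (intro power_decreasing) auto
        then show ?thesis using r by (intro mult_right_mono) auto
      qed
      finally have "\<bar>\<Prod>i<m. (x ! i - y ! i) ^ (\<alpha> ! i)\<bar> \<le> q * (r/2) ^ deg \<alpha>" .
      then have "\<bar>c \<alpha>\<bar> * \<bar>\<Prod>i<m. (x ! i - y ! i) ^ (\<alpha> ! i)\<bar> \<le> \<bar>c \<alpha>\<bar> * (q * (r/2) ^ deg \<alpha>)"
        by (intro mult_left_mono) auto
      moreover have P0: "(\<Prod>i<m. (y ! i - y ! i) ^ (\<alpha> ! i)) = (0::real)" using Py[OF that] False by presburger
      ultimately show ?thesis unfolding D_def B_def P0 by (simp add: abs_mult mult_ac)
    qed
    have qB: "(\<lambda>\<alpha>. q * B \<alpha>) summable_on \<Omega>" using Bsum by (rule summable_on_cmult_right)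
    have qBa: "(\<lambda>\<alpha>. norm (q * B \<alpha>)) summable_on \<Omega>"
      using qB by (rule summable_on_cong[THEN iffD1, rotated]) (use q0 r in \<open>auto simp: B_def\<close>)
    have Dabs: "(\<lambda>\<alpha>. norm (D \<alpha>)) summable_on \<Omega>"
      by (rule Infinite_Sum.abs_summable_on_comparison_test[OF qBa]) (use Dle q0 r in \<open>auto simp: B_def\<close>)
    have "\<bar>g x - g y\<bar> = \<bar>infsum D \<Omega>\<bar>" using hD infsumI by metis
    also have "\<dots> \<le> infsum (\<lambda>\<alpha>. \<bar>D \<alpha>\<bar>) \<Omega>" using norm_infsum_bound[OF Dabs] by simp
    also have "\<dots> \<le> infsum (\<lambda>\<alpha>. q * B \<alpha>) \<Omega>"
      by (rule infsum_mono[OF _ qB]) (use Dabs Dle in auto)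
    also have "\<dots> = q * T" unfolding T_def by (rule infsum_cmult_right) (use Bsum in auto)
    also have "\<dots> < e" by (rule qT)
    finally show "\<bar>g x - g y\<bar> < e" .
  qed
qed



lemma subseq_coords:
  fixes X :: "nat \<Rightarrow> real list"
  assumes "\<And>k i. i < N \<Longrightarrow> \<bar>X k ! i\<bar> \<le> M"
  shows "\<exists>r. strict_mono r \<and> (\<forall>i<N. convergent (\<lambda>k. X (r k) ! i))"
  using assms
proof (induction N)
  case 0
  then show ?case by (intro exI[of _ id]) (auto simp: strict_mono_def)
next
  case (Suc N)
  then obtain r1 where r1: "strict_mono r1" "\<forall>i<N. convergent (\<lambda>k. X (r1 k) ! i)" by force
  obtain r2 where r2: "strict_mono r2" "monoseq (\<lambda>k. X (r1 (r2 k)) ! N)"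
    using seq_monosub[of "\<lambda>k. X (r1 k) ! N"] by auto
  have "Bseq (\<lambda>k. X (r1 (r2 k)) ! N)" using Suc.prems[of N] by (intro BseqI'[of _ M]) auto
  then have cN: "convergent (\<lambda>k. X (r1 (r2 k)) ! N)" using r2(2) Bseq_monoseq_convergent by blast
  have "\<forall>i<Suc N. convergent (\<lambda>k. X ((r1 \<circ> r2) k) ! i)"
  proof (intro allI impI)
    fix i assume "i < Suc N"
    then show "convergent (\<lambda>k. X ((r1 \<circ> r2) k) ! i)"
    proof (cases "i = N")
      case True then show ?thesis using cN by simp
    next
      case False
      then have "convergent (\<lambda>k. X (r1 k) ! i)" using r1 \<open>i < Suc N\<close> by auto
      from convergent_subseq_convergent[OF this r2(1)] show ?thesis by (simp add: o_def)
    qed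
  qed
  moreover have "strict_mono (r1 \<circ> r2)" using r1(1) r2(1) by (rule strict_mono_o)
  ultimately show ?case by blast
qed

lemma extract_limit:
  fixes X :: "nat \<Rightarrow> real list"
  assumes Y: "\<And>y. y \<in> Y \<Longrightarrow> length y = N \<and> (\<forall>i<N. \<bar>y!i\<bar> \<le> M)" and XY: "\<And>k. X k \<in> Y"
  shows "\<exists>r w. strict_mono r \<and> w \<in> closure_n N Y \<and>
           (\<forall>\<delta>>0. eventually (\<lambda>k. \<forall>i<N. \<bar>X (r k) ! i - w ! i\<bar> < \<delta>) sequentially)"
proof -
  obtain r where r: "strict_mono r" "\<forall>i<N. convergent (\<lambda>k. X (r k) ! i)"
    using subseq_coords[of N X M] Y XY by blast
  define w where "w = map (\<lambda>i. lim (\<lambda>k. X (r k) ! i)) [0..<N]"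
  have lw: "length w = N" by (simp add: w_def)
  have conv: "(\<lambda>k. X (r k) ! i) \<longlonglongrightarrow> w ! i" if "i < N" for i
    using r(2) that by (simp add: w_def convergent_LIMSEQ_iff)
  have ev: "eventually (\<lambda>k. \<forall>i<N. \<bar>X (r k) ! i - w ! i\<bar> < \<delta>) sequentially" if "\<delta> > 0" for \<delta>
  proof -
    have "\<forall>i\<in>{..<N}. eventually (\<lambda>k. \<bar>X (r k) ! i - w ! i\<bar> < \<delta>) sequentially"
    proof
      fix i assume "i \<in> {..<N}"
      then have "(\<lambda>k. X (r k) ! i) \<longlonglongrightarrow> w ! i" using conv by auto
      then show "eventually (\<lambda>k. \<bar>X (r k) ! i - w ! i\<bar> < \<delta>) sequentially"
        using that by (auto simp: tendsto_iff dist_real_def)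
    qed
    then have "eventually (\<lambda>k. \<forall>i\<in>{..<N}. \<bar>X (r k) ! i - w ! i\<bar> < \<delta>) sequentially"
      by (rule eventually_ball_finite[rotated]) simp
    then show ?thesis by (rule eventually_mono) auto
  qed
  have "w \<in> closure_n N Y"
    unfolding closure_n_def
  proof (intro CollectI conjI allI impI lw)
    fix e :: real assume "e > 0"
    from ev[OF this] obtain k where k: "\<forall>i<N. \<bar>X (r k) ! i - w ! i\<bar> < e"
      unfolding eventually_sequentially by blast
    show "\<exists>z\<in>Y. \<forall>i<N. \<bar>w ! i - z ! i\<bar> < e"
    proof (rule bexI[of _ "X (r k)"])
      show "\<forall>i<N. \<bar>w ! i - X (r k) ! i\<bar> < e" using k by (simp add: abs_minus_commute)
    qed (rule XY)
  qed
  then show ?thesis using r(1) ev by blast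
qed

lemma cont_bounds:
  fixes f :: "real list \<Rightarrow> real"
  assumes Y: "\<And>y. y \<in> Y \<Longrightarrow> length y = N \<and> (\<forall>i<N. \<bar>y!i\<bar> \<le> M)"
    and cont: "\<And>w e. w \<in> closure_n N Y \<Longrightarrow> e > 0 \<Longrightarrow>
        \<exists>\<delta>>0. \<forall>x. length x = N \<and> (\<forall>i<N. \<bar>x!i - w!i\<bar> < \<delta>) \<longrightarrow> \<bar>f x - f w\<bar> < e"
    and pos: "\<And>w. w \<in> closure_n N Y \<Longrightarrow> f w > 0"
  shows "\<exists>c C. c > 0 \<and> (\<forall>y\<in>Y. c \<le> f y \<and> f y \<le> C)"
proof -
  have lower: "\<exists>c>0. \<forall>y\<in>Y. c \<le> f y"
  proof (rule ccontr)
    assume "\<not> ?thesis"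
    then have neg: "\<And>c. c > 0 \<Longrightarrow> \<exists>y\<in>Y. f y < c" by (simp add: not_le)
    have "\<forall>k::nat. \<exists>y. y \<in> Y \<and> f y < 1 / (real k + 1)"
    proof
      fix k :: nat
      have "(1::real) / (real k + 1) > 0" by simp
      from neg[OF this] show "\<exists>y. y \<in> Y \<and> f y < 1 / (real k + 1)" by blast
    qed
    from choice[OF this] obtain X where X0: "\<forall>k. X k \<in> Y \<and> f (X k) < 1 / (real k + 1)" by blast
    then have X: "\<And>k. X k \<in> Y" "\<And>k. f (X k) < 1 / (real k + 1)" by auto
    obtain r w where rw0: "strict_mono r \<and> w \<in> closure_n N Y \<and>
           (\<forall>\<delta>>0. eventually (\<lambda>k. \<forall>i<N. \<bar>X (r k) ! i - w ! i\<bar> < \<delta>) sequentially)"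
      using extract_limit[OF Y X(1)] by meson
    then have rw: "strict_mono r" "w \<in> closure_n N Y"
      "\<And>\<delta>. \<delta> > 0 \<Longrightarrow> eventually (\<lambda>k. \<forall>i<N. \<bar>X (r k) ! i - w ! i\<bar> < \<delta>) sequentially"
      by auto
    have fw: "f w > 0" using pos rw(2) by blast
    obtain \<delta> where d: "\<delta> > 0" "\<And>x. length x = N \<Longrightarrow> (\<forall>i<N. \<bar>x!i - w!i\<bar> < \<delta>) \<Longrightarrow> \<bar>f x - f w\<bar> < f w / 2"
      using cont[OF rw(2), of "f w / 2"] fw by auto
    obtain K :: nat where K: "1 / (real K + 1) < f w / 2"
    proof -
      obtain K :: nat where "2 / f w < real K" using reals_Archimedean2 by blast
      then have "2 / f w < real K + 1" by simp
      then have "2 < (real K + 1) * f w" using fw by (simp add: field_simps)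
      then have "1 / (real K + 1) < f w / 2" by (simp add: field_simps)
      then show ?thesis using that by blast
    qed
    have "eventually (\<lambda>k. k \<ge> K \<and> (\<forall>i<N. \<bar>X (r k) ! i - w ! i\<bar> < \<delta>)) sequentially"
      using eventually_conj[OF eventually_ge_at_top[of K] rw(3)[OF d(1)]] .
    then obtain k where k: "k \<ge> K" "\<forall>i<N. \<bar>X (r k) ! i - w ! i\<bar> < \<delta>" using eventually_sequentially by auto
    have "\<bar>f (X (r k)) - f w\<bar> < f w / 2" using d(2)[OF _ k(2)] Y[OF X(1)] by blast
    moreover have "f (X (r k)) < f w / 2"
    proof -
      have "r k \<ge> k" using rw(1) by (rule seq_suble)
      then have "real K + 1 \<le> real (r k) + 1" using k(1) by simp
      then have "1 / (real (r k) + 1) \<le> 1 / (real K + 1)" by (intro divide_left_mono) auto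
      then show ?thesis using X(2)[of "r k"] K by linarith
    qed
    ultimately show False by linarith
  qed
  have upper: "\<exists>C. \<forall>y\<in>Y. f y \<le> C"
  proof (rule ccontr)
    assume "\<not> ?thesis"
    then have "\<forall>k::nat. \<exists>y. y \<in> Y \<and> f y > real k" by (simp add: not_le) blast
    from choice[OF this] obtain X where X0: "\<forall>k. X k \<in> Y \<and> f (X k) > real k" by blast
    then have X: "\<And>k. X k \<in> Y" "\<And>k. f (X k) > real k" by auto
    obtain r w where rw0: "strict_mono r \<and> w \<in> closure_n N Y \<and>
           (\<forall>\<delta>>0. eventually (\<lambda>k. \<forall>i<N. \<bar>X (r k) ! i - w ! i\<bar> < \<delta>) sequentially)"
      using extract_limit[OF Y X(1)] by meson
    then have rw: "strict_mono r" "w \<in> closure_n N Y"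
      "\<And>\<delta>. \<delta> > 0 \<Longrightarrow> eventually (\<lambda>k. \<forall>i<N. \<bar>X (r k) ! i - w ! i\<bar> < \<delta>) sequentially"
      by auto
    obtain \<delta> where d: "\<delta> > 0" "\<And>x. length x = N \<Longrightarrow> (\<forall>i<N. \<bar>x!i - w!i\<bar> < \<delta>) \<Longrightarrow> \<bar>f x - f w\<bar> < 1"
      using cont[OF rw(2), of 1] by auto
    obtain K :: nat where K: "f w + 1 < real K" using reals_Archimedean2 by blast
    have "eventually (\<lambda>k. k \<ge> K \<and> (\<forall>i<N. \<bar>X (r k) ! i - w ! i\<bar> < \<delta>)) sequentially"
      using eventually_conj[OF eventually_ge_at_top[of K] rw(3)[OF d(1)]] .
    then obtain k where k: "k \<ge> K" "\<forall>i<N. \<bar>X (r k) ! i - w ! i\<bar> < \<delta>" using eventually_sequentially by auto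
    have "\<bar>f (X (r k)) - f w\<bar> < 1" using d(2)[OF _ k(2)] Y[OF X(1)] by blast
    moreover have "r k \<ge> k" using rw(1) by (rule seq_suble)
    then have "f (X (r k)) > real K" using X(2)[of "r k"] k(1) by linarith
    ultimately show False using K by linarith
  qed
  from lower upper show ?thesis by blast
qed



lemma closure_n_sub: "(\<And>y. y \<in> Y \<Longrightarrow> length y = N) \<Longrightarrow> Y \<subseteq> closure_n N Y"
  unfolding closure_n_def by force

lemma strong_unit_bounds:
  assumes "strong_unit k S u"
  shows "\<exists>c C. c > 0 \<and> ((\<forall>x\<in>S. c \<le> u x \<and> u x \<le> C) \<or> (\<forall>x\<in>S. -C \<le> u x \<and> u x \<le> -c))"
proof -
  obtain \<beta> :: "real list list" and U where
    M: "\<exists>M. \<forall>x\<in>S. \<forall>j<length \<beta>. \<bar>map (\<lambda>bj. monom k bj x) \<beta> ! j\<bar> \<le> M" and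
    an: "analytic_set (length \<beta>) (closure_n (length \<beta>) ((\<lambda>x. map (\<lambda>bj. monom k bj x) \<beta>) ` S)) U" and
    sg: "(\<forall>y\<in>closure_n (length \<beta>) ((\<lambda>x. map (\<lambda>bj. monom k bj x) \<beta>) ` S). U y > 0) \<or>
         (\<forall>y\<in>closure_n (length \<beta>) ((\<lambda>x. map (\<lambda>bj. monom k bj x) \<beta>) ` S). U y < 0)" and
    ux: "\<forall>x\<in>S. u x = U (map (\<lambda>bj. monom k bj x) \<beta>)"
    using assms unfolding strong_unit_def Let_def by blast
  define N where "N = length \<beta>"
  define \<phi> where "\<phi> = (\<lambda>x. map (\<lambda>bj. monom k bj x) \<beta>)"
  define Y where "Y = \<phi> ` S"
  obtain M where M: "\<forall>x\<in>S. \<forall>j<N. \<bar>\<phi> x ! j\<bar> \<le> M" using M unfolding N_def \<phi>_def by blast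
  have Y: "\<And>y. y \<in> Y \<Longrightarrow> length y = N \<and> (\<forall>i<N. \<bar>y!i\<bar> \<le> M)"
    using M unfolding Y_def \<phi>_def N_def by auto
  obtain V g where V: "open_n N V" "closure_n N Y \<subseteq> V" "analytic_on_n N V g"
      "\<forall>x\<in>closure_n N Y. g x = U x"
    using an unfolding analytic_set_def N_def Y_def \<phi>_def by blast
  have cont: "\<exists>\<delta>>0. \<forall>x. length x = N \<and> (\<forall>i<N. \<bar>x!i - w!i\<bar> < \<delta>) \<longrightarrow> \<bar>g x - g w\<bar> < e"
    if "w \<in> closure_n N Y" "e > 0" for w e
    using analytic_cont[OF V(3) _ that(2)] V(2) that(1) by blast
  have YC: "Y \<subseteq> closure_n N Y" using Y by (intro closure_n_sub) auto
  have uS: "u x = g (\<phi> x)" if "x \<in> S" for x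
  proof -
    have "\<phi> x \<in> closure_n N Y" using YC that unfolding Y_def by blast
    then have "g (\<phi> x) = U (\<phi> x)" using V(4) by blast
    moreover have "u x = U (\<phi> x)" using ux that unfolding \<phi>_def by blast
    ultimately show ?thesis by simp
  qed
  from sg show ?thesis
  proof
    assume pos: "\<forall>y\<in>closure_n (length \<beta>) ((\<lambda>x. map (\<lambda>bj. monom k bj x) \<beta>) ` S). U y > 0"
    have "\<exists>c C. c > 0 \<and> (\<forall>y\<in>Y. c \<le> g y \<and> g y \<le> C)"
      by (rule cont_bounds[OF Y cont]) (use pos V(4) in \<open>auto simp: N_def Y_def \<phi>_def\<close>)
    then obtain c C where "c > 0" "\<forall>y\<in>Y. c \<le> g y \<and> g y \<le> C" by blast
    then have "\<forall>x\<in>S. c \<le> u x \<and> u x \<le> C" using uS unfolding Y_def by simp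
    then show ?thesis using \<open>c > 0\<close> by blast
  next
    assume neg: "\<forall>y\<in>closure_n (length \<beta>) ((\<lambda>x. map (\<lambda>bj. monom k bj x) \<beta>) ` S). U y < 0"
    have cont': "\<exists>\<delta>>0. \<forall>x. length x = N \<and> (\<forall>i<N. \<bar>x!i - w!i\<bar> < \<delta>) \<longrightarrow> \<bar>- g x - - g w\<bar> < e"
      if "w \<in> closure_n N Y" "e > 0" for w e
      using cont[OF that] by (simp add: abs_minus_commute)
    have "\<exists>c C. c > 0 \<and> (\<forall>y\<in>Y. c \<le> - g y \<and> - g y \<le> C)"
      by (rule cont_bounds[OF Y cont']) (use neg V(4) in \<open>auto simp: N_def Y_def \<phi>_def\<close>)
    then obtain c C where "c > 0" "\<forall>y\<in>Y. c \<le> - g y \<and> - g y \<le> C" by blast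
    then have "\<forall>x\<in>S. -C \<le> u x \<and> u x \<le> -c" using uS unfolding Y_def by force
    then show ?thesis using \<open>c > 0\<close> by blast
  qed
qed



definition Lf :: "nat \<Rightarrow> (nat \<Rightarrow> real) \<Rightarrow> real list \<Rightarrow> real" where
  "Lf k g s = g 0 + (\<Sum>j<k-1. g (Suc j) * s!j)"

lemma monom_curve:
  assumes t: "0 < t" and l: "length s = k - 1" and k: "1 \<le> k"
  shows "monom k \<alpha> (t # map (\<lambda>c. t powr c) s) = t powr Lf k (\<lambda>i. \<alpha>!i) s"
proof -
  obtain m where km: "k = Suc m" using k by (cases k) auto
  have "monom k \<alpha> (t # map (\<lambda>c. t powr c) s)
      = t powr (\<alpha>!0) * (\<Prod>i<m. (t powr (s!i)) powr (\<alpha>!Suc i))"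
    unfolding monom_def km prod.lessThan_Suc_shift using l km by simp
  also have "(\<Prod>i<m. (t powr (s!i)) powr (\<alpha>!Suc i)) = (\<Prod>i<m. t powr (\<alpha>!Suc i * s!i))"
    by (simp add: powr_powr mult.commute)
  also have "\<dots> = t powr (\<Sum>i<m. \<alpha>!Suc i * s!i)" using t by (simp add: powr_sum)
  finally show ?thesis unfolding Lf_def km using t by (simp add: powr_add)
qed

lemma monom_pos: "(\<And>i. i < k \<Longrightarrow> 0 < x!i) \<Longrightarrow> 0 < monom k \<alpha> x"
  unfolding monom_def by (rule prod_pos) (metis lessThan_iff powr_gt_zero less_irrefl)

lemma monom_zero:
  assumes a: "\<And>i. i < k \<Longrightarrow> \<alpha>!i = 0" and x: "\<And>i. i < k \<Longrightarrow> 0 < x!i"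
  shows "monom k \<alpha> x = 1"
proof -
  have "\<forall>i\<in>{..<k}. x!i powr (\<alpha>!i) = 1"
  proof
    fix i assume "i \<in> {..<k}"
    then have "\<alpha>!i = 0" "x!i > 0" using a x by auto
    then show "x!i powr (\<alpha>!i) = 1" by simp
  qed
  then show ?thesis unfolding monom_def by simp
qed

lemma Lf_diff: "Lf k (\<lambda>i. f i - g i) s = Lf k f s - Lf k g s"
  unfolding Lf_def by (simp add: left_diff_distrib sum_subtractf)

lemma Lf_update:
  assumes "j < k - 1" "length s = k - 1"
  shows "Lf k g (s[j:=x]) = Lf k g s + g (Suc j) * (x - s!j)"
proof -
  have "(\<Sum>i<k-1. g (Suc i) * (s[j:=x])!i)
      = (\<Sum>i<k-1. g (Suc i) * s!i + (if i = j then g (Suc j) * (x - s!j) else 0))"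
    using assms by (intro sum.cong) (auto simp: nth_list_update algebra_simps)
  also have "\<dots> = (\<Sum>i<k-1. g (Suc i) * s!i) + g (Suc j) * (x - s!j)"
    using assms by (simp add: sum.distrib)
  finally show ?thesis unfolding Lf_def by simp
qed

lemma Lf_zero_coeffs:
  assumes k: "1 \<le> k" and l: "length s0 = k - 1" and h: "h > 0"
    and nn: "\<And>j x. j < k - 1 \<Longrightarrow> \<bar>x - s0!j\<bar> \<le> h \<Longrightarrow> Lf k g (s0[j:=x]) \<ge> 0"
    and z: "Lf k g s0 = 0"
  shows "\<forall>i<k. g i = 0"
proof -
  have gs: "g (Suc j) = 0" if j: "j < k - 1" for j
  proof -
    have "Lf k g (s0[j:=s0!j + h]) \<ge> 0" using nn[OF j] h by simp
    then have 1: "g (Suc j) * h \<ge> 0" using Lf_update[OF j l] z by simp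
    have "Lf k g (s0[j:=s0!j - h]) \<ge> 0" using nn[OF j] h by simp
    then have 2: "g (Suc j) * (- h) \<ge> 0" using Lf_update[OF j l] z by simp
    from 1 2 h show ?thesis by (metis mult_minus_right neg_0_le_iff_le order_antisym zero_le_mult_iff
        linorder_not_le)
  qed
  then have "(\<Sum>j<k-1. g (Suc j) * s0!j) = 0" by simp
  then have g0: "g 0 = 0" using z unfolding Lf_def by simp
  show ?thesis
  proof (intro allI impI)
    fix i assume "i < k"
    then show "g i = 0" using g0 gs by (cases i) auto
  qed
qed

lemma Lf_cont:
  assumes "length s = k - 1" "length s0 = k - 1" "\<And>j. j < k - 1 \<Longrightarrow> \<bar>s!j - s0!j\<bar> \<le> r"
  shows "\<bar>Lf k g s - Lf k g s0\<bar> \<le> (\<Sum>j<k-1. \<bar>g (Suc j)\<bar>) * r"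
proof -
  have "\<bar>Lf k g s - Lf k g s0\<bar> = \<bar>\<Sum>j<k-1. g (Suc j) * (s!j - s0!j)\<bar>"
    unfolding Lf_def by (simp add: sum_subtractf right_diff_distrib)
  also have "\<dots> \<le> (\<Sum>j<k-1. \<bar>g (Suc j) * (s!j - s0!j)\<bar>)" by (rule sum_abs)
  also have "\<dots> \<le> (\<Sum>j<k-1. \<bar>g (Suc j)\<bar> * r)"
    by (rule sum_mono) (use assms(3) in \<open>auto simp: abs_mult intro: mult_left_mono\<close>)
  also have "\<dots> = (\<Sum>j<k-1. \<bar>g (Suc j)\<bar>) * r" by (simp add: sum_distrib_right)
  finally show ?thesis .
qed

lemma neg_exp_unbounded:
  fixes L M \<epsilon> :: real
  assumes "0 < \<epsilon>" "L < 0"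
  shows "\<exists>t. 0 < t \<and> t < \<epsilon> \<and> t powr L > M"
proof -
  define E where "E = exp (ln (\<bar>M\<bar> + 1) / L)"
  define t where "t = min (\<epsilon>/2) (E/2)"
  have E: "E > 0" by (simp add: E_def)
  have t: "0 < t" "t < \<epsilon>" "t < E" using assms E by (auto simp: t_def)
  have "ln t < ln E" using t E by simp
  then have "ln t < ln (\<bar>M\<bar> + 1) / L" by (simp add: E_def)
  then have "L * ln t > ln (\<bar>M\<bar> + 1)" using assms(2) by (simp add: field_simps)
  then have "exp (ln (\<bar>M\<bar> + 1)) < exp (L * ln t)" by (rule exp_less_mono)
  moreover have "exp (ln (\<bar>M\<bar> + 1)) = \<bar>M\<bar> + 1" by (rule exp_ln) linarith
  ultimately have "exp (L * ln t) > \<bar>M\<bar> + 1" by simp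
  then have "t powr L > \<bar>M\<bar> + 1" using t by (simp add: powr_def mult.commute)
  then show ?thesis using t by (intro exI[of _ t]) auto
qed

lemma exp_bound_nonneg:
  fixes L M \<epsilon> :: real
  assumes "0 < \<epsilon>" "\<And>t. 0 < t \<Longrightarrow> t < \<epsilon> \<Longrightarrow> t powr L \<le> M"
  shows "L \<ge> 0"
proof (rule ccontr)
  assume "\<not> L \<ge> 0"
  then obtain t where "0 < t" "t < \<epsilon>" "t powr L > M" using neg_exp_unbounded[OF assms(1), of L M] by auto
  then show False using assms(2) by force
qed



lemma Lf_zero_coeffs':
  assumes k: "1 \<le> k" and l: "length s0 = k - 1"
    and nn: "\<And>j. j < k - 1 \<Longrightarrow> \<exists>h>0. Lf k g (s0[j:=s0!j + h]) \<ge> 0 \<and> Lf k g (s0[j:=s0!j - h]) \<ge> 0"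
    and z: "Lf k g s0 = 0"
  shows "\<forall>i<k. g i = 0"
proof -
  have gs: "g (Suc j) = 0" if j: "j < k - 1" for j
  proof -
    obtain h where h: "h > 0" "Lf k g (s0[j:=s0!j + h]) \<ge> 0" "Lf k g (s0[j:=s0!j - h]) \<ge> 0"
      using nn[OF j] by blast
    have 1: "g (Suc j) * h \<ge> 0" using h(2) Lf_update[OF j l] z by simp
    have 2: "g (Suc j) * (- h) \<ge> 0" using h(3) Lf_update[OF j l] z by simp
    from 1 2 h(1) show ?thesis
      by (metis mult_minus_right neg_0_le_iff_le order_antisym zero_le_mult_iff linorder_not_le)
  qed
  then have "(\<Sum>j<k-1. g (Suc j) * s0!j) = 0" by simp
  then have g0: "g 0 = 0" using z unfolding Lf_def by simp
  show ?thesis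
  proof (intro allI impI)
    fix i assume "i < k"
    then show "g i = 0" using g0 gs by (cases i) auto
  qed
qed

lemma prep_form:
  assumes pf: "prepared_fun J k S f" and ne: "S \<noteq> {}" and pos: "\<forall>y\<in>S. \<forall>i<k. 0 < y!i"
    and nn: "\<forall>y\<in>S. f y \<ge> 0"
  shows "(\<forall>y\<in>S. f y = 0) \<or>
    (\<exists>\<alpha> c C. length \<alpha> = k \<and> 0 < c \<and> (\<forall>y\<in>S. c * monom k \<alpha> y \<le> f y \<and> f y \<le> C * monom k \<alpha> y))"
proof (cases "\<forall>y\<in>S. f y = 0")
  case True then show ?thesis by blast
next
  case False
  then obtain \<alpha> u where au: "length \<alpha> = k" "strong_unit k S u" "\<forall>x\<in>S. f x = monom k \<alpha> x * u x"
    using pf unfolding prepared_fun_def by blast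
  obtain c C where cC: "c > 0" "(\<forall>x\<in>S. c \<le> u x \<and> u x \<le> C) \<or> (\<forall>x\<in>S. -C \<le> u x \<and> u x \<le> -c)"
    using strong_unit_bounds[OF au(2)] by blast
  have mp: "\<And>y. y \<in> S \<Longrightarrow> monom k \<alpha> y > 0" using pos by (intro monom_pos) auto
  from cC(2) show ?thesis
  proof
    assume h: "\<forall>x\<in>S. c \<le> u x \<and> u x \<le> C"
    have "\<forall>y\<in>S. c * monom k \<alpha> y \<le> f y \<and> f y \<le> C * monom k \<alpha> y"
    proof
      fix y assume y: "y \<in> S"
      have "c * monom k \<alpha> y \<le> u y * monom k \<alpha> y" using h y mp[OF y] by (intro mult_right_mono) auto
      moreover have "u y * monom k \<alpha> y \<le> C * monom k \<alpha> y" using h y mp[OF y] by (intro mult_right_mono) auto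
      ultimately show "c * monom k \<alpha> y \<le> f y \<and> f y \<le> C * monom k \<alpha> y" using au(3) y by (simp add: mult.commute)
    qed
    then show ?thesis using au(1) cC(1) by blast
  next
    assume h: "\<forall>x\<in>S. -C \<le> u x \<and> u x \<le> -c"
    obtain y where y: "y \<in> S" using ne by blast
    have "u y < 0" using h y cC(1) by force
    then have "f y < 0" using au(3) y mp[OF y] by (simp add: mult_pos_neg)
    then show ?thesis using nn y by force
  qed
qed

lemma proj_proj: "i \<le> m \<Longrightarrow> proj i (proj m A) = proj i A"
  unfolding proj_def by (simp add: image_image min_absorb1)

lemma prepared_cell_facts:
  "prepared_cell J n A a b \<Longrightarrow> 1 \<le> i \<Longrightarrow> i \<le> n \<Longrightarrow>
    \<exists>J'. prepared_fun J' (i-1) (proj (i-1) A) (a i) \<and> prepared_fun J' (i-1) (proj (i-1) A) (b i) \<and>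
         0 \<in> closure (a i ` proj (i-1) A)"
proof (induction n arbitrary: J A)
  case 0 then show ?case by simp
next
  case (Suc m)
  show ?case
  proof (cases "i = Suc m")
    case True
    then show ?thesis using Suc.prems(1) by auto
  next
    case False
    then have im: "i \<le> m" using Suc.prems by simp
    have "prepared_cell (J \<inter> {1..m}) m (proj m A) a b" using Suc.prems(1) by simp
    from Suc.IH[OF this Suc.prems(2) im] show ?thesis
      using proj_proj[of "i-1" m A] im by auto
  qed
qed

definition sliver :: "real list set \<Rightarrow> nat \<Rightarrow> real \<Rightarrow> (nat \<Rightarrow> real) \<Rightarrow> (nat \<Rightarrow> real) \<Rightarrow> bool" where
  "sliver P k \<epsilon> p q \<longleftrightarrow> 0 < \<epsilon> \<and> \<epsilon> < 1 \<and> (\<forall>i\<in>{2..k}. 0 < p i \<and> p i < q i) \<and>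
           (\<forall>t1 s. 0 < t1 \<and> t1 < \<epsilon> \<and> length s = k - 1 \<and>
                   (\<forall>j<k - 1. p (j + 2) < s ! j \<and> s ! j < q (j + 2)) \<longrightarrow>
                   t1 # map (\<lambda>c. t1 powr c) s \<in> P)"

lemma cell_ne: "open_sa_cell n A a b \<Longrightarrow> A \<noteq> {}"
  unfolding open_sa_cell_def by blast

lemma cell_box: "open_sa_cell n A a b \<Longrightarrow> x \<in> A \<Longrightarrow> length x = n \<and> (\<forall>i<n. 0 < x!i \<and> x!i < 1)"
  unfolding open_sa_cell_def by blast

lemma proj_len:
  assumes "open_sa_cell n A a b" "i \<le> n" "y \<in> proj i A"
  shows "length y = i \<and> (\<forall>j<i. 0 < y!j \<and> y!j < 1)"
proof -
  obtain x where x: "x \<in> A" "y = take i x" using assms(3) unfolding proj_def by blast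
  then show ?thesis using cell_box[OF assms(1) x(1)] assms(2) by auto
qed

lemma proj0: "open_sa_cell n A a b \<Longrightarrow> proj 0 A = {[]}"
  unfolding proj_def using cell_ne by fastforce

lemma projn: "open_sa_cell n A a b \<Longrightarrow> proj n A = A"
proof -
  assume c: "open_sa_cell n A a b"
  have "take n x = x" if "x \<in> A" for x using cell_box[OF c that] by simp
  then show ?thesis unfolding proj_def by force
qed

lemma mem_step:
  assumes c: "open_sa_cell n A a b" and i: "1 \<le> i" "i \<le> n" and y: "y \<in> proj (i-1) A"
    and v: "a i y < v" "v < b i y"
  shows "y @ [v] \<in> proj i A"
proof -
  have eq: "proj i A = {x. length x = i \<and> take (i - 1) x \<in> proj (i - 1) A \<and>
        a i (take (i - 1) x) < x ! (i - 1) \<and> x ! (i - 1) < b i (take (i - 1) x)}"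
    using c i unfolding open_sa_cell_def by auto
  have ly: "length y = i - 1" using proj_len[OF c _ y] i by simp
  then show ?thesis unfolding eq using i y v by (simp add: nth_append)
qed

lemma cell_ab:
  assumes c: "open_sa_cell n A a b" and i: "1 \<le> i" "i \<le> n" and y: "y \<in> proj (i-1) A"
  shows "0 \<le> a i y \<and> a i y < b i y \<and> b i y \<le> 1"
proof -
  have ab: "a i y < b i y" using c i y unfolding open_sa_cell_def by auto
  have inr: "0 < v \<and> v < 1" if "a i y < v" "v < b i y" for v
  proof -
    have "y @ [v] \<in> proj i A" by (rule mem_step[OF c i y that])
    from proj_len[OF c i(2) this] have "0 < (y@[v])!(i-1) \<and> (y@[v])!(i-1) < 1" using i by auto
    moreover have "length y = i - 1" using proj_len[OF c _ y] i by simp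
    ultimately show ?thesis by (simp add: nth_append)
  qed
  have b0: "b i y > 0"
  proof (rule ccontr)
    assume "\<not> b i y > 0"
    then show False using inr[of "(a i y + b i y)/2"] ab by auto
  qed
  have a0: "a i y \<ge> 0"
  proof (rule ccontr)
    assume "\<not> a i y \<ge> 0"
    then show False using inr[of "a i y / 2"] b0 by auto
  qed
  have b1: "b i y \<le> 1"
  proof (rule ccontr)
    assume "\<not> b i y \<le> 1"
    define M where "M = max (a i y) 1"
    have "a i y < (M + b i y)/2" "(M + b i y)/2 < b i y" "M \<ge> 1"
      using ab \<open>\<not> b i y \<le> 1\<close> by (auto simp: M_def max_def)
    then have "(M + b i y)/2 < 1" using inr[of "(M + b i y)/2"] by blast
    then have "M + b i y < 2" by simp
    then show False using \<open>M \<ge> 1\<close> \<open>\<not> b i y \<le> 1\<close> by linarith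
  qed
  show ?thesis using a0 ab b1 by blast
qed



lemma step:
  fixes S P :: "real list set" and a' b' :: "real list \<Rightarrow> real" and k :: nat
  assumes k: "1 \<le> k"
    and sl: "sliver S k \<epsilon> p q"
    and Sbox: "\<forall>y\<in>S. length y = k \<and> (\<forall>i<k. 0 < y!i \<and> y!i < 1)"
    and mem: "\<forall>y\<in>S. \<forall>v. a' y < v \<and> v < b' y \<longrightarrow> y @ [v] \<in> P"
    and ab: "\<forall>y\<in>S. 0 \<le> a' y \<and> a' y < b' y \<and> b' y \<le> 1"
    and pa: "prepared_fun J k S a'" and pb: "prepared_fun J k S b'"
    and z: "0 \<in> closure (a' ` S)"
    and und: "\<not>(\<exists>C>0. \<forall>y\<in>S. b' y < C * a' y)"
  shows "\<exists>\<epsilon>' p' q'. sliver P (Suc k) \<epsilon>' p' q'"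
proof -
  define pt where "pt t s = t # map (\<lambda>c. t powr c) s" for t :: real and s
  define inbox where "inbox s \<longleftrightarrow> length s = k - 1 \<and> (\<forall>j<k-1. p (j+2) < s!j \<and> s!j < q (j+2))" for s
  have e: "0 < \<epsilon>" "\<epsilon> < 1" and pq: "\<forall>i\<in>{2..k}. 0 < p i \<and> p i < q i"
    using sl unfolding sliver_def by blast+
  have curve: "pt t s \<in> S" if "0 < t" "t < \<epsilon>" "inbox s" for t s
    using sl that unfolding sliver_def inbox_def pt_def by blast
  define s0 where "s0 = map (\<lambda>j. (p (j+2) + q (j+2))/2) [0..<k-1]"
  have pqj: "p (j+2) < q (j+2)" "0 < p (j+2)" if "j < k-1" for j using pq that by auto
  have ls0: "length s0 = k - 1" by (simp add: s0_def)
  have s0j: "s0!j = (p (j+2) + q (j+2))/2" if "j < k-1" for j using that by (simp add: s0_def)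
  have "\<forall>j<k-1. p (j + 2) < s0 ! j \<and> s0 ! j < q (j + 2)"
  proof (intro allI impI)
    fix j assume j: "j < k - 1"
    show "p (j + 2) < s0 ! j \<and> s0 ! j < q (j + 2)" using s0j[OF j] pqj[OF j] by (simp add: field_simps)
  qed
  then have in0: "inbox s0" using ls0 unfolding inbox_def by blast
  have Sne: "S \<noteq> {}" using curve[of "\<epsilon>/2" s0] e in0 by auto
  have Spos: "\<forall>y\<in>S. \<forall>i<k. 0 < y!i" using Sbox by auto
  have monc: "monom k \<gamma> (pt t s) = t powr Lf k (\<lambda>i. \<gamma>!i) s" if "0 < t" "inbox s" for t s \<gamma>
    using monom_curve[OF that(1) _ k] that(2) unfolding pt_def inbox_def by auto
  have nn_h: "\<exists>h>0. inbox (s0[j := s0!j + h]) \<and> inbox (s0[j := s0!j - h])" if j: "j < k-1" for j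
  proof -
    define h where "h = (q (j+2) - p (j+2))/4"
    have h: "h > 0" using pqj[OF j] by (simp add: h_def)
    have "p (j+2) < s0!j - h" "s0!j + h < q (j+2)" using s0j[OF j] pqj[OF j] by (simp_all add: h_def field_simps)
    then have "inbox (s0[j := s0!j + h]) \<and> inbox (s0[j := s0!j - h])"
      using in0 h j unfolding inbox_def by (auto simp: nth_list_update)
    then show ?thesis using h by blast
  qed
  obtain \<beta> cb Cb where \<beta>: "length \<beta> = k" "0 < cb"
    "\<forall>y\<in>S. cb * monom k \<beta> y \<le> b' y \<and> b' y \<le> Cb * monom k \<beta> y"
  proof -
    have "(\<forall>y\<in>S. b' y = 0) \<or> (\<exists>\<alpha> c C. length \<alpha> = k \<and> 0 < c \<and>
        (\<forall>y\<in>S. c * monom k \<alpha> y \<le> b' y \<and> b' y \<le> C * monom k \<alpha> y))"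
      by (rule prep_form[OF pb Sne Spos]) (use ab in force)
    moreover have "\<not>(\<forall>y\<in>S. b' y = 0)" using Sne ab by force
    ultimately show ?thesis using that by blast
  qed
  define LB where "LB s = Lf k (\<lambda>i. \<beta>!i) s" for s
  have key: "\<exists>ga Ca lo. 0 \<le> Ca \<and> 0 \<le> lo \<and> LB s0 \<le> lo \<and> lo < Lf k ga s0 \<and>
     (\<forall>t s. 0 < t \<and> t < \<epsilon> \<and> inbox s \<longrightarrow> a' (pt t s) \<le> Ca * t powr Lf k ga s)"
  proof -
    have "(\<forall>y\<in>S. a' y = 0) \<or> (\<exists>\<alpha> c C. length \<alpha> = k \<and> 0 < c \<and>
        (\<forall>y\<in>S. c * monom k \<alpha> y \<le> a' y \<and> a' y \<le> C * monom k \<alpha> y))"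
      by (rule prep_form[OF pa Sne Spos]) (use ab in blast)
    then show ?thesis
    proof
      assume a0: "\<forall>y\<in>S. a' y = 0"
      define lo where "lo = max 0 (LB s0)"
      define ga where "ga = (\<lambda>i::nat. if i = 0 then lo + 1 else 0)"
      have L: "Lf k ga s = lo + 1" for s unfolding Lf_def ga_def by simp
      have "\<forall>t s. 0 < t \<and> t < \<epsilon> \<and> inbox s \<longrightarrow> a' (pt t s) \<le> 0 * t powr Lf k ga s"
        using a0 curve by auto
      then show ?thesis using L by (intro exI[of _ ga] exI[of _ 0] exI[of _ lo]) (auto simp: lo_def)
    next
      assume "\<exists>\<alpha> c C. length \<alpha> = k \<and> 0 < c \<and>
        (\<forall>y\<in>S. c * monom k \<alpha> y \<le> a' y \<and> a' y \<le> C * monom k \<alpha> y)"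
      then obtain \<alpha> ca Ca where \<alpha>: "length \<alpha> = k" "0 < ca"
        "\<forall>y\<in>S. ca * monom k \<alpha> y \<le> a' y \<and> a' y \<le> Ca * monom k \<alpha> y" by blast
      define LA where "LA s = Lf k (\<lambda>i. \<alpha>!i) s" for s
      obtain y0 where y0: "y0 \<in> S" using Sne by blast
      have my0: "monom k \<alpha> y0 > 0" "monom k \<beta> y0 > 0" using Spos y0 by (auto intro!: monom_pos)
      have Ca0: "Ca > 0"
      proof -
        have "ca * monom k \<alpha> y0 \<le> Ca * monom k \<alpha> y0" using \<alpha>(3) y0 by force
        then have "ca \<le> Ca" using my0 by simp
        then show ?thesis using \<alpha>(2) by simp
      qed
      have Cb0: "Cb > 0"
      proof -
        have "cb * monom k \<beta> y0 \<le> Cb * monom k \<beta> y0" using \<beta>(3) y0 by force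
        then have "cb \<le> Cb" using my0 by simp
        then show ?thesis using \<beta>(2) by simp
      qed
      have F1: "LA s \<ge> 0" if "inbox s" for s
      proof (rule exp_bound_nonneg[OF e(1), of _ "1/ca"])
        fix t :: real assume t: "0 < t" "t < \<epsilon>"
        have y: "pt t s \<in> S" using curve t that by blast
        have "ca * t powr LA s \<le> a' (pt t s)" using \<alpha>(3)[rule_format, OF y] monc[OF t(1) that, of \<alpha>] by (simp add: LA_def)
        also have "\<dots> < 1" using ab y by force
        finally show "t powr LA s \<le> 1/ca" using \<alpha>(2) by (simp add: field_simps)
      qed
      have F2: "Lf k (\<lambda>i. \<alpha>!i - \<beta>!i) s \<ge> 0" if "inbox s" for s
      proof (rule exp_bound_nonneg[OF e(1), of _ "Cb/ca"])
        fix t :: real assume t: "0 < t" "t < \<epsilon>"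
        have y: "pt t s \<in> S" using curve t that by blast
        have 1: "ca * t powr LA s \<le> a' (pt t s)" using \<alpha>(3)[rule_format, OF y] monc[OF t(1) that, of \<alpha>] by (simp add: LA_def)
        have 2: "b' (pt t s) \<le> Cb * t powr LB s" using \<beta>(3)[rule_format, OF y] monc[OF t(1) that, of \<beta>] by (simp add: LB_def)
        have "ca * t powr LA s < Cb * t powr LB s" using 1 2 ab y by force
        then have "t powr LA s / t powr LB s \<le> Cb/ca" using \<alpha>(2) t by (simp add: field_simps)
        then show "t powr Lf k (\<lambda>i. \<alpha>!i - \<beta>!i) s \<le> Cb/ca"
          by (simp add: Lf_diff powr_diff LA_def LB_def)
      qed
      define lo where "lo = max 0 (LB s0)"
      have "lo < LA s0"
      proof (rule ccontr)
        assume "\<not> lo < LA s0"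
        then have "LA s0 \<le> 0 \<or> LA s0 \<le> LB s0" by (auto simp: lo_def)
        then show False
        proof
          assume "LA s0 \<le> 0"
          then have "LA s0 = 0" using F1[OF in0] by simp
          have "\<forall>i<k. \<alpha>!i = 0"
          proof (rule Lf_zero_coeffs'[OF k ls0])
            fix j assume j: "j < k - 1"
            then show "\<exists>h>0. 0 \<le> Lf k ((!) \<alpha>) (s0[j := s0 ! j + h]) \<and> 0 \<le> Lf k ((!) \<alpha>) (s0[j := s0 ! j - h])"
              using nn_h[OF j] F1 unfolding LA_def by blast
          qed (use \<open>LA s0 = 0\<close> in \<open>simp add: LA_def\<close>)
          then have m1: "\<forall>y\<in>S. monom k \<alpha> y = 1" using Spos by (auto intro!: monom_zero)
          then have ge: "\<forall>y\<in>S. a' y \<ge> ca" using \<alpha>(3) by force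
          obtain y where "y \<in> S" "dist (a' y) 0 < ca" using z \<alpha>(2) unfolding closure_approachable by blast
          then show False using ge ab by force
        next
          assume "LA s0 \<le> LB s0"
          then have z2: "Lf k (\<lambda>i. \<alpha>!i - \<beta>!i) s0 = 0" using F2[OF in0] by (simp add: Lf_diff LA_def LB_def)
          have "\<forall>i<k. \<alpha>!i - \<beta>!i = 0"
          proof (rule Lf_zero_coeffs'[OF k ls0])
            fix j assume j: "j < k - 1"
            then show "\<exists>h>0. 0 \<le> Lf k (\<lambda>i. \<alpha>!i - \<beta>!i) (s0[j := s0 ! j + h]) \<and> 0 \<le> Lf k (\<lambda>i. \<alpha>!i - \<beta>!i) (s0[j := s0 ! j - h])"
              using nn_h[OF j] F2 by blast
          qed (rule z2)
          then have "\<alpha> = \<beta>" using \<alpha>(1) \<beta>(1) by (simp add: list_eq_iff_nth_eq)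
          have "\<forall>y\<in>S. b' y < (Cb/ca + 1) * a' y"
          proof
            fix y assume y: "y \<in> S"
            have my: "monom k \<alpha> y > 0" using Spos y by (auto intro!: monom_pos)
            have a1: "ca * monom k \<alpha> y \<le> a' y" using \<alpha>(3) y by blast
            have b1: "b' y \<le> Cb * monom k \<alpha> y" using \<beta>(3) y \<open>\<alpha> = \<beta>\<close> by blast
            have "Cb/ca * (ca * monom k \<alpha> y) \<le> Cb/ca * a' y"
              using a1 Cb0 \<alpha>(2) by (intro mult_left_mono) auto
            then have "Cb * monom k \<alpha> y \<le> Cb/ca * a' y" using \<alpha>(2) by simp
            moreover have "a' y > 0" using a1 my \<alpha>(2) by (smt (verit) mult_pos_pos)
            ultimately show "b' y < (Cb/ca + 1) * a' y" using b1 by (simp add: distrib_right)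
          qed
          moreover have "Cb/ca + 1 > 0" using Cb0 \<alpha>(2) by (simp add: add_pos_pos)
          ultimately show False using und by blast
        qed
      qed
      moreover have "\<forall>t s. 0 < t \<and> t < \<epsilon> \<and> inbox s \<longrightarrow> a' (pt t s) \<le> Ca * t powr Lf k (\<lambda>i. \<alpha>!i) s"
      proof (intro allI impI)
        fix t s assume H: "0 < t \<and> t < \<epsilon> \<and> inbox s"
        then have y: "pt t s \<in> S" using curve by blast
        then show "a' (pt t s) \<le> Ca * t powr Lf k (\<lambda>i. \<alpha>!i) s" using \<alpha>(3) monc[of t s \<alpha>] H by force
      qed
      ultimately show ?thesis using Ca0
        by (intro exI[of _ "\<lambda>i. \<alpha>!i"] exI[of _ Ca] exI[of _ lo]) (auto simp: lo_def LA_def)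
    qed
  qed
  then obtain ga Ca lo where K: "0 \<le> Ca" "0 \<le> lo" "LB s0 \<le> lo" "lo < Lf k ga s0"
     "\<And>t s. 0 < t \<Longrightarrow> t < \<epsilon> \<Longrightarrow> inbox s \<Longrightarrow> a' (pt t s) \<le> Ca * t powr Lf k ga s" by blast
  define hi where "hi = Lf k ga s0"
  define d where "d = (hi - lo)/8"
  have d: "d > 0" using K(4) by (simp add: d_def hi_def)
  define G where "G = (\<Sum>j<k-1. \<bar>ga (Suc j)\<bar>) + (\<Sum>j<k-1. \<bar>\<beta>!(Suc j)\<bar>)"
  have G1: "(\<Sum>j<k-1. \<bar>ga (Suc j)\<bar>) \<le> G" "(\<Sum>j<k-1. \<bar>\<beta>!(Suc j)\<bar>) \<le> G"
    unfolding G_def by (simp_all add: sum_nonneg)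
  have G0: "G \<ge> 0" unfolding G_def by (simp add: sum_nonneg)
  define \<rho> where "\<rho> = d / (G + 1)"
  have \<rho>: "\<rho> > 0" using d G0 by (simp add: \<rho>_def)
  have G\<rho>: "G * \<rho> < d"
  proof -
    have "G * \<rho> = d * (G / (G + 1))" using G0 by (simp add: \<rho>_def field_simps)
    also have "\<dots> < d * 1" using d G0 by (intro mult_strict_left_mono) auto
    finally show ?thesis by simp
  qed
  define p' where "p' i = (if i \<le> k then max (p i) (s0!(i-2) - \<rho>) else lo + 2*d)" for i
  define q' where "q' i = (if i \<le> k then min (q i) (s0!(i-2) + \<rho>) else hi - 2*d)" for i
  define m where "m = min cb (1/(Ca+1))"
  have m: "0 < m" "m \<le> cb" "Ca * m < 1"
  proof -
    show "0 < m" using \<beta>(2) K(1) by (simp add: m_def)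
    show "m \<le> cb" by (simp add: m_def)
    have "Ca * m \<le> Ca * (1/(Ca+1))" using K(1) by (intro mult_left_mono) (auto simp: m_def)
    also have "\<dots> < 1" using K(1) by (simp add: field_simps)
    finally show "Ca * m < 1" .
  qed
  define \<epsilon>' where "\<epsilon>' = min \<epsilon> (m powr (1/d))"
  have e': "0 < \<epsilon>'" "\<epsilon>' < 1" "\<epsilon>' \<le> \<epsilon>" using e m(1) by (auto simp: \<epsilon>'_def)
  have tpd: "t powr d < m" if "0 < t" "t < \<epsilon>'" for t
  proof -
    have "t powr d < (m powr (1/d)) powr d"
      using that d by (intro powr_less_mono2) (auto simp: \<epsilon>'_def)
    also have "\<dots> = m" using d m(1) by (simp add: powr_powr)
    finally show ?thesis .
  qed
  have box': "\<forall>i\<in>{2..Suc k}. 0 < p' i \<and> p' i < q' i"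
  proof
    fix i assume i: "i \<in> {2..Suc k}"
    show "0 < p' i \<and> p' i < q' i"
    proof (cases "i \<le> k")
      case True
      then have j: "i - 2 < k - 1" "i - 2 + 2 = i" using i by auto
      have "s0!(i-2) = (p i + q i)/2" using s0j[OF j(1)] j(2) by simp
      moreover have "0 < p i" "p i < q i" using pq i True by auto
      ultimately show ?thesis using True \<rho> by (simp add: p'_def q'_def field_simps)
    next
      case False
      then show ?thesis using K(2) d by (simp add: p'_def q'_def d_def field_simps)
    qed
  qed
  have main: "t # map (\<lambda>c. t powr c) sn \<in> P"
    if t: "0 < t" "t < \<epsilon>'" and lsn: "length sn = k"
      and bx: "\<And>j. j < k \<Longrightarrow> p' (j + 2) < sn ! j \<and> sn ! j < q' (j + 2)" for t sn
  proof -
    define s where "s = take (k-1) sn"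
    define zz where "zz = sn!(k-1)"
    have sn: "sn = s @ [zz]"
      using lsn k take_Suc_conv_app_nth[of "k-1" sn] unfolding s_def zz_def by simp
    have ls: "length s = k - 1" using lsn by (simp add: s_def)
    have sj: "s!j = sn!j" if "j < k - 1" for j using that by (simp add: s_def)
    have inb: "inbox s" and cl: "\<And>j. j < k - 1 \<Longrightarrow> \<bar>s!j - s0!j\<bar> \<le> \<rho>"
    proof -
      have PQ: "p (j+2) < s!j \<and> s!j < q (j+2) \<and> \<bar>s!j - s0!j\<bar> \<le> \<rho>" if j: "j < k - 1" for j
      proof -
        have "j + 2 \<le> k" using j by simp
        then have "p' (j+2) = max (p (j+2)) (s0!j - \<rho>)" "q' (j+2) = min (q (j+2)) (s0!j + \<rho>)"
          by (simp_all add: p'_def q'_def)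
        moreover have "p' (j + 2) < sn ! j \<and> sn ! j < q' (j + 2)" using bx j by simp
        ultimately show ?thesis using sj[OF j] by (auto simp: abs_le_iff)
      qed
      then show "inbox s" using ls unfolding inbox_def by blast
      fix j assume "j < k - 1"
      then show "\<bar>s!j - s0!j\<bar> \<le> \<rho>" using PQ by blast
    qed
    have zb: "lo + 2*d < zz" "zz < hi - 2*d"
    proof -
      have "k - 1 < k" using k by simp
      moreover have "\<not> (k - 1 + 2 \<le> k)" using k by simp
      ultimately show "lo + 2*d < zz" "zz < hi - 2*d" using bx[of "k-1"] unfolding zz_def p'_def q'_def by auto
    qed
    have devA: "\<bar>Lf k ga s - hi\<bar> < d"
    proof -
      have "\<bar>Lf k ga s - Lf k ga s0\<bar> \<le> (\<Sum>j<k-1. \<bar>ga (Suc j)\<bar>) * \<rho>" by (rule Lf_cont[OF ls ls0 cl])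
      also have "\<dots> \<le> G * \<rho>" using G1 \<rho> by (intro mult_right_mono) auto
      finally show ?thesis using G\<rho> by (simp add: hi_def)
    qed
    have devB: "\<bar>LB s - LB s0\<bar> < d"
    proof -
      have "\<bar>LB s - LB s0\<bar> \<le> (\<Sum>j<k-1. \<bar>\<beta>!(Suc j)\<bar>) * \<rho>" unfolding LB_def by (rule Lf_cont[OF ls ls0 cl])
      also have "\<dots> \<le> G * \<rho>" using G1 \<rho> by (intro mult_right_mono) auto
      finally show ?thesis using G\<rho> by simp
    qed
    have te: "t < \<epsilon>" using t e'(3) by simp
    have t1: "t \<le> 1" using te e by simp
    have y: "pt t s \<in> S" by (rule curve[OF t(1) te inb])
    have td: "t powr d < m" by (rule tpd[OF t])
    have upper: "t powr zz < b' (pt t s)"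
    proof -
      have "LB s < LB s0 + d" using devB by (simp add: abs_less_iff)
      then have g1: "d \<le> zz - LB s" using zb K(3) by linarith
      have "t powr zz = t powr (zz - LB s) * t powr LB s" by (simp add: powr_add[symmetric])
      also have "\<dots> \<le> t powr d * t powr LB s"
        using g1 t t1 by (intro mult_right_mono powr_mono') auto
      also have "\<dots> < cb * t powr LB s" using td m(2) t by (intro mult_strict_right_mono) auto
      also have "\<dots> \<le> b' (pt t s)" using \<beta>(3)[rule_format, OF y] monc[OF t(1) inb, of \<beta>] by (simp add: LB_def)
      finally show ?thesis .
    qed
    have lower: "a' (pt t s) < t powr zz"
    proof -
      have "hi - d < Lf k ga s" using devA by (simp add: abs_less_iff)
      then have g2: "d \<le> Lf k ga s - zz" using zb by linarith
      have "a' (pt t s) \<le> Ca * t powr Lf k ga s" by (rule K(5)[OF t(1) te inb])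
      also have "\<dots> = Ca * t powr (Lf k ga s - zz) * t powr zz" by (simp add: powr_add[symmetric])
      also have "\<dots> \<le> Ca * t powr d * t powr zz"
        using g2 t t1 K(1) by (intro mult_right_mono mult_left_mono powr_mono') auto
      also have "\<dots> \<le> Ca * m * t powr zz"
        using td K(1) t by (intro mult_right_mono mult_left_mono) auto
      also have "\<dots> < 1 * t powr zz" using m(3) t by (intro mult_strict_right_mono) auto
      finally show ?thesis by simp
    qed
    have "pt t s @ [t powr zz] \<in> P" using mem y upper lower by blast
    then show "t # map (\<lambda>c. t powr c) sn \<in> P" unfolding sn pt_def by simp
  qed
  show ?thesis unfolding sliver_def
    by (intro exI[of _ \<epsilon>'] exI[of _ p'] exI[of _ q'] conjI e'(1) e'(2) box' allI impI main) auto
qed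



theorem proposition4p5:
  fixes n :: nat and A :: "real list set" and a b :: "nat \<Rightarrow> real list \<Rightarrow> real"
  assumes "n \<ge> 1"
    and "open_sa_cell n A a b"
    and "prepared n A a b"
    and "\<forall>i\<in>{1..n}. \<not> asym_determined A a b i"
  shows "\<exists>\<epsilon> p q. 0 < \<epsilon> \<and> \<epsilon> < 1 \<and> (\<forall>i\<in>{2..n}. 0 < p i \<and> p i < q i) \<and>
           (\<forall>t1 s. 0 < t1 \<and> t1 < \<epsilon> \<and> length s = n - 1 \<and>
                   (\<forall>j<n - 1. p (j + 2) < s ! j \<and> s ! j < q (j + 2)) \<longrightarrow>
                   t1 # map (\<lambda>c. t1 powr c) s \<in> A)"
proof -
  have c: "open_sa_cell n A a b" by (rule assms(2))
  have pc: "prepared_cell {i\<in>{1..n}. \<not> asym_determined A a b i} n A a b"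
    using assms(3) unfolding prepared_def .
  have und: "\<not> (\<exists>C>0. \<forall>y\<in>proj k A. b (Suc k) y < C * a (Suc k) y)" if "Suc k \<le> n" for k
  proof -
    have "Suc k \<in> {1..n}" using that by simp
    then have "\<not> asym_determined A a b (Suc k)" using assms(4) by blast
    then show ?thesis unfolding asym_determined_def by simp
  qed
  have all: "1 \<le> k \<longrightarrow> k \<le> n \<longrightarrow> (\<exists>\<epsilon> p q. sliver (proj k A) k \<epsilon> p q)" for k
  proof (induction k)
    case 0 show ?case by simp
  next
    case (Suc k)
    show ?case
    proof (intro impI)
      assume k1: "1 \<le> Suc k" and kn: "Suc k \<le> n"
      show "\<exists>\<epsilon> p q. sliver (proj (Suc k) A) (Suc k) \<epsilon> p q"
      proof (cases "k = 0")
        case True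
        have p0: "proj 0 A = {[]}" by (rule proj0[OF c])
        have e0: "[] \<in> proj (1 - 1) A" using p0 by simp
        have ab: "0 \<le> a 1 [] \<and> a 1 [] < b 1 [] \<and> b 1 [] \<le> 1"
          using cell_ab[OF c _ _ e0] assms(1) by simp
        have u1: "\<not> (\<exists>C>0. b 1 [] < C * a 1 [])" using und[of 0] kn True p0 by simp
        have a0: "a 1 [] = 0"
        proof (rule ccontr)
          assume "a 1 [] \<noteq> 0"
          then have ap: "a 1 [] > 0" using ab by simp
          have "b 1 [] < (b 1 [] / a 1 [] + 1) * a 1 []" using ap by (simp add: distrib_right)
          moreover have "b 1 [] / a 1 [] + 1 > 0" using ap ab by (simp add: add_pos_pos)
          ultimately show False using u1 by blast
        qed
        define \<epsilon> where "\<epsilon> = min (b 1 []) (1/2)"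
        have "sliver (proj 1 A) 1 \<epsilon> (\<lambda>_. 1) (\<lambda>_. 2)"
          unfolding sliver_def
        proof (intro conjI allI impI)
          show "0 < \<epsilon>" "\<epsilon> < 1" using ab a0 by (auto simp: \<epsilon>_def)
          show "\<forall>i\<in>{2..1}. 0 < (1::real) \<and> (1::real) < 2" by simp
          fix t1 and s :: "real list"
          assume H: "0 < t1 \<and> t1 < \<epsilon> \<and> length s = 1 - 1 \<and>
            (\<forall>j<1 - 1. 1 < s ! j \<and> s ! j < (2::real))"
          then have "s = []" by simp
          have "[] @ [t1] \<in> proj 1 A"
            by (rule mem_step[OF c _ _ e0]) (use H a0 assms(1) in \<open>auto simp: \<epsilon>_def\<close>)
          then show "t1 # map (\<lambda>c. t1 powr c) s \<in> proj 1 A" using \<open>s = []\<close> by simp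
        qed
        then show ?thesis using True by auto
      next
        case False
        then have k: "1 \<le> k" by simp
        from Suc.IH k kn obtain \<epsilon> p q where sl: "sliver (proj k A) k \<epsilon> p q" by auto
        obtain J' where J': "prepared_fun J' k (proj k A) (a (Suc k))"
            "prepared_fun J' k (proj k A) (b (Suc k))" "0 \<in> closure (a (Suc k) ` proj k A)"
          using prepared_cell_facts[OF pc k1 kn] by auto
        show ?thesis
        proof (rule step[OF k sl _ _ _ J'(1) J'(2) J'(3) und[OF kn]])
          show "\<forall>y\<in>proj k A. length y = k \<and> (\<forall>i<k. 0 < y ! i \<and> y ! i < 1)"
          proof
            fix y assume "y \<in> proj k A"
            from proj_len[OF c _ this] kn show "length y = k \<and> (\<forall>i<k. 0 < y ! i \<and> y ! i < 1)" by simp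
          qed
          show "\<forall>y\<in>proj k A. \<forall>v. a (Suc k) y < v \<and> v < b (Suc k) y \<longrightarrow> y @ [v] \<in> proj (Suc k) A"
            using mem_step[OF c k1 kn] by auto
          show "\<forall>y\<in>proj k A. 0 \<le> a (Suc k) y \<and> a (Suc k) y < b (Suc k) y \<and> b (Suc k) y \<le> 1"
            using cell_ab[OF c k1 kn] by auto
        qed
      qed
    qed
  qed
  from all[of n] assms(1) obtain \<epsilon> p q where "sliver (proj n A) n \<epsilon> p q" by auto
  then show ?thesis unfolding sliver_def projn[OF c] by blast
qed


end
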